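(* Let $m\geq 3$ be an integer. Let $H$ be the graph obtained from $C_m[4]$ by adding, for each vertex $x$ of $C_m$, all six edges among the four vertices $(x,0),(x,1),(x,2),(x,3)$ (so that these four vertices induce a $K_4$). Then there exists a perfect matching $I$ of $C_m[4]$ such that the edge set of $H-I$ can be partitioned into two $C_4$-factors and three $C_m$-factors.
   Context: For a graph $G$ and a positive integer $k$, $G[k]$ is the graph with vertex set $V(G)\times\{0,1,\dots,k-1\}$ in which $(u,i)$ and $(w,j)$ are adjacent if and only if $uw\in E(G)$. $C_m$ is the cycle of length $m$. A perfect matching (1-factor) is a set of pairwise disjoint edges covering all vertices. A $C_k$-factor of a graph is a spanning subgraph each of whose components is a cycle of length $k$. $H-I$ denotes $H$ with the edges of $I$ removed. *)

theory Defs
  imports Main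
begin

definition cycle_graph_V :: "nat \<Rightarrow> nat set" where
  "cycle_graph_V m = {0..<m}"

definition cycle_graph_E :: "nat \<Rightarrow> nat set set" where
  "cycle_graph_E m = {{x, (x + 1) mod m} | x. x < m}"

definition lex_V :: "'a set \<Rightarrow> nat \<Rightarrow> ('a \<times> nat) set" where
  "lex_V V k = V \<times> {0..<k}"

definition lex_E :: "'a set set \<Rightarrow> nat \<Rightarrow> ('a \<times> nat) set set" where
  "lex_E E k = {{(u, i), (w, j)} | u w i j. {u, w} \<in> E \<and> i < k \<and> j < k}"

definition H_E :: "nat \<Rightarrow> (nat \<times> nat) set set" where
  "H_E m = lex_E (cycle_graph_E m) 4 \<union>
     {{(x, i), (x, j)} | x i j. x < m \<and> i < 4 \<and> j < 4 \<and> i \<noteq> j}"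

definition perfect_matching :: "'a set \<Rightarrow> 'a set set \<Rightarrow> 'a set set \<Rightarrow> bool" where
  "perfect_matching V E I \<longleftrightarrow> I \<subseteq> E \<and> (\<forall>v\<in>V. \<exists>!e. e \<in> I \<and> v \<in> e)"

definition is_cycle :: "nat \<Rightarrow> 'a set set \<Rightarrow> bool" where
  "is_cycle k C \<longleftrightarrow> 3 \<le> k \<and>
     (\<exists>f :: nat \<Rightarrow> 'a. inj_on f {0..<k} \<and> C = {{f i, f ((i + 1) mod k)} | i. i < k})"

definition cycle_factor :: "nat \<Rightarrow> 'a set \<Rightarrow> 'a set set \<Rightarrow> 'a set set \<Rightarrow> bool" where
  "cycle_factor k V E F \<longleftrightarrow> F \<subseteq> E \<and>
     (\<exists>\<C>. (\<forall>C\<in>\<C>. is_cycle k C) \<and>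
          (\<forall>C\<in>\<C>. \<forall>D\<in>\<C>. C \<noteq> D \<longrightarrow> \<Union>C \<inter> \<Union>D = {}) \<and>
          \<Union>(\<Union>\<C>) = V \<and> F = \<Union>\<C>)"

end

theory Submission
  imports Defs
begin

definition cr :: "nat \<Rightarrow> nat \<Rightarrow> nat \<Rightarrow> nat \<Rightarrow> (nat \<times> nat) set" where
  "cr m x a b = {(x,a), (Suc x mod m, b)}"

lemma nx_ne: "3 \<le> m \<Longrightarrow> x < m \<Longrightarrow> Suc x mod m \<noteq> x"
  by (cases "Suc x < m") (auto simp: mod_Suc)

lemma nnx_ne: "3 \<le> m \<Longrightarrow> x < m \<Longrightarrow> Suc (Suc x mod m) mod m \<noteq> x"
proof -
  assume m: "3 \<le> m" "x < m"
  show ?thesis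
  proof (cases "Suc x < m")
    case True
    then show ?thesis using m by (cases "Suc (Suc x) < m") (auto simp: mod_Suc)
  next
    case False
    then have "x = m - 1" using m by auto
    then show ?thesis using m by (auto simp: mod_Suc)
  qed
qed

lemma suc_mod_inj: "x < m \<Longrightarrow> y < m \<Longrightarrow> Suc x mod m = Suc y mod m \<Longrightarrow> x = y"
  by (auto simp: mod_Suc split: if_splits)

lemma pred_ex: "y < m \<Longrightarrow> \<exists>x<m. Suc x mod m = y"
proof (cases y)
  case 0 assume "y < m" then show ?thesis using 0 by (intro exI[of _ "m - 1"]) auto
next
  case (Suc z) assume "y < m" then show ?thesis using Suc by (intro exI[of _ z]) auto
qed

lemma cr_eq: "3 \<le> m \<Longrightarrow> x < m \<Longrightarrow> y < m \<Longrightarrow> cr m x a b = cr m y c d \<Longrightarrow> x = y \<and> a = c \<and> b = d"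
  unfolding cr_def using nx_ne nnx_ne by (auto simp: doubleton_eq_iff) 

lemma cr_inn: "3 \<le> m \<Longrightarrow> x < m \<Longrightarrow> cr m x a b \<noteq> {(y,c),(y,d)}"
  unfolding cr_def using nx_ne[of m x] by (auto simp: doubleton_eq_iff) 

definition Sh :: "nat \<Rightarrow> (nat \<Rightarrow> nat \<Rightarrow> nat \<Rightarrow> bool) \<Rightarrow> (nat \<Rightarrow> nat \<Rightarrow> bool) \<Rightarrow> (nat \<times> nat) set set" where
  "Sh m P Q = {cr m x a b | x a b. x < m \<and> a < 4 \<and> b < 4 \<and> P x a b} \<union>
              {{(x,a),(x,b)} | x a b. x < m \<and> a < 4 \<and> b < 4 \<and> a \<noteq> b \<and> Q a b}"

lemma cr_lex: "x < m \<Longrightarrow> a < 4 \<Longrightarrow> b < 4 \<Longrightarrow> cr m x a b \<in> lex_E (cycle_graph_E m) 4"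
  unfolding cr_def lex_E_def cycle_graph_E_def by fastforce

lemma HE_char: assumes "3 \<le> m" shows "H_E m = Sh m (\<lambda>_ _ _. True) (\<lambda>_ _. True)"
proof
  show "H_E m \<subseteq> Sh m (\<lambda>_ _ _. True) (\<lambda>_ _. True)"
  proof
    fix e assume "e \<in> H_E m"
    then consider (L) "e \<in> lex_E (cycle_graph_E m) 4"
      | (K) x i j where "e = {(x,i),(x,j)}" "x < m" "i < 4" "j < 4" "i \<noteq> j"
      unfolding H_E_def by blast
    then show "e \<in> Sh m (\<lambda>_ _ _. True) (\<lambda>_ _. True)"
    proof cases
      case L
      then obtain u w i j where e: "e = {(u,i),(w,j)}" "{u,w} \<in> cycle_graph_E m" "i < 4" "j < 4"
        unfolding lex_E_def by blast
      then obtain x where x: "x < m" "{u,w} = {x, Suc x mod m}"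
        unfolding cycle_graph_E_def by auto
      from x(2) have "(u = x \<and> w = Suc x mod m) \<or> (u = Suc x mod m \<and> w = x)"
        by (auto simp: doubleton_eq_iff)
      then show ?thesis
      proof
        assume "u = x \<and> w = Suc x mod m"
        then have "e = cr m x i j" using e unfolding cr_def by auto
        then show ?thesis using x e unfolding Sh_def by blast
      next
        assume "u = Suc x mod m \<and> w = x"
        then have "e = cr m x j i" using e unfolding cr_def by auto
        then show ?thesis using x e unfolding Sh_def by blast
      qed
    next
      case K then show ?thesis unfolding Sh_def by blast
    qed
  qed
next
  show "Sh m (\<lambda>_ _ _. True) (\<lambda>_ _. True) \<subseteq> H_E m"
  proof
    fix e assume "e \<in> Sh m (\<lambda>_ _ _. True) (\<lambda>_ _. True)"
    then consider (C) x a b where "e = cr m x a b" "x < m" "a < 4" "b < 4"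
      | (K) x a b where "e = {(x,a),(x,b)}" "x < m" "a < 4" "b < 4" "a \<noteq> b"
      unfolding Sh_def by blast
    then show "e \<in> H_E m"
    proof cases
      case C then show ?thesis using cr_lex[of x m a b] unfolding H_E_def by blast
    next
      case K then show ?thesis unfolding H_E_def by blast
    qed
  qed
qed

lemma Sh_mono: "Sh m P Q \<subseteq> Sh m (\<lambda>_ _ _. True) (\<lambda>_ _. True)"
  unfolding Sh_def by blast

lemma Sh_sub: "3 \<le> m \<Longrightarrow> Sh m P Q \<subseteq> H_E m"
  using Sh_mono HE_char by blast

lemma Sh_mem_cr: assumes "3 \<le> m" "x < m" "a < 4" "b < 4"
  shows "(cr m x a b \<in> Sh m P Q) = P x a b"
proof
  assume "cr m x a b \<in> Sh m P Q"
  then consider (C) y c d where "cr m x a b = cr m y c d" "y < m" "P y c d"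
      | (K) y c d where "cr m x a b = {(y,c),(y,d)}"
      unfolding Sh_def by blast
  then show "P x a b"
  proof cases
    case C then show ?thesis using cr_eq[of m x y a b c d] assms by auto
  next
    case K then show ?thesis using cr_inn[of m x a b y c d] assms by auto
  qed
next
  assume "P x a b" then show "cr m x a b \<in> Sh m P Q" using assms unfolding Sh_def by blast
qed

lemma Sh_mem_inn: assumes "3 \<le> m" "x < m" "a < 4" "b < 4" "a \<noteq> b" "\<And>a b. Q a b = Q b a"
  shows "({(x,a),(x,b)} \<in> Sh m P Q) = Q a b"
proof
  assume "{(x,a),(x,b)} \<in> Sh m P Q"
  then consider (C) y c d where "{(x,a),(x,b)} = cr m y c d" "y < m"
      | (K) y c d where "{(x,a),(x,b)} = {(y,c),(y,d)}" "Q c d"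
      unfolding Sh_def by blast
  then show "Q a b"
  proof cases
    case C then show ?thesis using cr_inn[of m y c d x a b] assms by auto
  next
    case K then show ?thesis using assms(6)[of c d] by (auto simp: doubleton_eq_iff)
  qed
next
  assume "Q a b" then show "{(x,a),(x,b)} \<in> Sh m P Q" using assms unfolding Sh_def by blast
qed

lemma Sh_cases:
  assumes "e \<in> Sh m P Q"
  obtains (C) x a b where "e = cr m x a b" "x < m" "a < 4" "b < 4" "P x a b"
    | (K) x a b where "e = {(x,a),(x,b)}" "x < m" "a < 4" "b < 4" "a \<noteq> b" "Q a b"
  using assms unfolding Sh_def by blast

definition ee :: "nat \<Rightarrow> nat \<Rightarrow> bool" where "ee m x = (odd m \<and> x = m - 1)"
definition hh :: "nat \<Rightarrow> nat \<Rightarrow> nat \<Rightarrow> nat" where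
  "hh m k x = (if k = 2 then (if ee m x then 1 else 0) else if k = 3 then x mod 2
               else (if ee m x then 3 else 3 * (x mod 2)))"
definition DD :: "nat \<Rightarrow> nat \<Rightarrow> nat \<Rightarrow> nat" where
  "DD m k x = (hh m k (Suc x mod m) + 4 - hh m k x) mod 4"

lemma hh_lt: "hh m k x < 4"
  unfolding hh_def by auto

lemma DD_prop: assumes "3 \<le> m" "x < m"
  shows "DD m 2 x \<noteq> DD m 3 x \<and> DD m 2 x \<noteq> DD m 4 x \<and> DD m 3 x \<noteq> DD m 4 x \<and>
         DD m 2 x \<noteq> 2 \<and> DD m 3 x \<noteq> 2 \<and> DD m 4 x \<noteq> 2"
proof -
  consider (A) "x = m - 1" | (B) "x = m - 2" | (C) "Suc (Suc x) < m" using assms by linarith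
  then show ?thesis
  proof cases
    case A
    then have n: "Suc x mod m = 0" using assms by auto
    have e0: "\<not> ee m 0" using assms unfolding ee_def by auto
    show ?thesis
    proof (cases "odd m")
      case True
      then have "x mod 2 = 0" "ee m x" using A assms unfolding ee_def by presburger+
      then show ?thesis unfolding DD_def hh_def n using e0 by simp
    next
      case False
      then have "x mod 2 = 1" "\<not> ee m x" using A assms unfolding ee_def by presburger+
      then show ?thesis unfolding DD_def hh_def n using e0 by simp
    qed
  next
    case B
    then have n: "Suc x mod m = m - 1" using assms by auto
    have e0: "\<not> ee m x" using assms B unfolding ee_def by auto
    show ?thesis
    proof (cases "odd m")
      case True
      then have "x mod 2 = 1" "(m - 1) mod 2 = 0" "ee m (m - 1)" using B assms unfolding ee_def by presburger+
      then show ?thesis unfolding DD_def hh_def n using e0 by simp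
    next
      case False
      then have "x mod 2 = 0" "(m - 1) mod 2 = 1" "\<not> ee m (m - 1)" using B assms unfolding ee_def by presburger+
      then show ?thesis unfolding DD_def hh_def n using e0 by simp
    qed
  next
    case C
    then have n: "Suc x mod m = Suc x" using assms by auto
    have e0: "\<not> ee m x" "\<not> ee m (Suc x)" using assms C unfolding ee_def by auto
    show ?thesis
    proof (cases "even x")
      case True
      then have "x mod 2 = 0" "Suc x mod 2 = 1" by presburger+
      then show ?thesis unfolding DD_def hh_def n using e0 by simp
    next
      case False
      then have "x mod 2 = 1" "Suc x mod 2 = 0" by presburger+
      then show ?thesis unfolding DD_def hh_def n using e0 by simp
    qed
  qed
qed

lemma DD_lt: "DD m k x < 4" unfolding DD_def by simp

lemma pig: "(p::nat) < 4 \<Longrightarrow> q<4 \<Longrightarrow> r<4 \<Longrightarrow> d<4 \<Longrightarrow> p\<noteq>q \<Longrightarrow> p\<noteq>r \<Longrightarrow> q\<noteq>r \<Longrightarrow> p\<noteq>2 \<Longrightarrow> q\<noteq>2 \<Longrightarrow> r\<noteq>2 \<Longrightarrow> d\<noteq>2 \<Longrightarrow> d=p \<or> d=q \<or> d=r"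
  by presburger

lemma DD_cover: assumes "3 \<le> m" "x < m" "d < 4" "d \<noteq> 2"
  shows "d = DD m 2 x \<or> d = DD m 3 x \<or> d = DD m 4 x"
  using DD_prop[OF assms(1,2)] DD_lt[of m 2 x] DD_lt[of m 3 x] DD_lt[of m 4 x] assms(3,4)
  using pig by metis

lemma less4: "n < (4::nat) \<Longrightarrow> n = 0 \<or> n = 1 \<or> n = 2 \<or> n = 3" by auto

lemma fin4: "{g i |i. i < (4::nat)} = {g 0, g 1, g 2, g 3}"
proof
  show "{g i |i. i < (4::nat)} \<subseteq> {g 0, g 1, g 2, g 3}" using less4 by blast
  show "{g 0, g 1, g 2, g 3} \<subseteq> {g i |i. i < (4::nat)}"
  proof -
    have "(0::nat) < 4" "(1::nat) < 4" "(2::nat) < 4" "(3::nat) < 4" by simp_all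
    then show ?thesis by blast
  qed
qed
lemma cyc4: assumes "a \<noteq> b" "a \<noteq> c" "a \<noteq> d" "b \<noteq> c" "b \<noteq> d" "c \<noteq> d"
  shows "is_cycle 4 {{a,b},{b,c},{c,d},{d,a}}"
proof -
  define f where "f j = (if j = 0 then a else if j = 1 then b else if j = (2::nat) then c else d)" for j
  have inj: "inj_on f {0..<4}" unfolding inj_on_def
  proof (intro ballI impI)
    fix i j :: nat assume "i \<in> {0..<4}" "j \<in> {0..<4}" "f i = f j"
    then show "i = j" using less4[of i] less4[of j] assms unfolding f_def by auto
  qed
  have eq: "{{f i, f ((i + 1) mod 4)} | i. i < 4} = {{a,b},{b,c},{c,d},{d,a}}"
  proof -
    have "f 0 = a" "f 1 = b" "f 2 = c" "f 3 = d" unfolding f_def by simp_all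
    moreover have "((0::nat) + 1) mod 4 = 1" "((1::nat) + 1) mod 4 = 2" "((2::nat) + 1) mod 4 = 3" "((3::nat) + 1) mod 4 = 0" by simp_all
    ultimately show ?thesis unfolding fin4 by (simp only:)
  qed
  show ?thesis unfolding is_cycle_def
    by (intro conjI exI[of _ f]) (simp, rule inj, rule eq[symmetric])
qed
lemma ar1: "(p::nat) < 4 \<Longrightarrow> q < 4 \<Longrightarrow> ((i+q) mod 4 + 4 - (i+p) mod 4) mod 4 = (q + 4 - p) mod 4"
proof -
  assume "p < 4" "q < 4"
  moreover have "i mod 4 < 4" by simp
  moreover have "(i+q) mod 4 = (i mod 4 + q) mod 4" "(i+p) mod 4 = (i mod 4 + p) mod 4" by (simp_all add: mod_add_left_eq)
  ultimately show ?thesis using less4[of p] less4[of q] less4[of "i mod 4"] by auto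
qed
lemma ar2: "(a::nat) < 4 \<Longrightarrow> b < 4 \<Longrightarrow> p < 4 \<Longrightarrow> q < 4 \<Longrightarrow> (b+4-a) mod 4 = (q+4-p) mod 4 \<Longrightarrow>
   ((a+4-p) mod 4 + p) mod 4 = a \<and> ((a+4-p) mod 4 + q) mod 4 = b"
  using less4[of a] less4[of b] less4[of p] less4[of q] by auto
lemma ar3: "(i::nat) < 4 \<Longrightarrow> i' < 4 \<Longrightarrow> (i + t) mod 4 = (i' + t) mod 4 \<Longrightarrow> i = i'"
proof -
  assume "i < 4" "i' < 4" "(i + t) mod 4 = (i' + t) mod 4"
  moreover have "t mod 4 < 4" by simp
  moreover have "(i+t) mod 4 = (i + t mod 4) mod 4" "(i'+t) mod 4 = (i' + t mod 4) mod 4" by (simp_all add: mod_add_right_eq)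
  ultimately show ?thesis using less4[of i] less4[of i'] less4[of "t mod 4"] by auto
qed
lemma ar4: "(c::nat) < 4 \<Longrightarrow> p < 4 \<Longrightarrow> ((c+4-p) mod 4 + p) mod 4 = c"
  using less4[of c] less4[of p] by auto

lemma V_eq: "lex_V (cycle_graph_V m) 4 = {0..<m} \<times> {0..<4}"
  unfolding lex_V_def cycle_graph_V_def by simp

lemma cm_factor:
  assumes m: "3 \<le> m" and h: "\<And>x. h x < 4"
    and sub: "Sh m (\<lambda>x a b. (b+4-a) mod 4 = (h (Suc x mod m) + 4 - h x) mod 4) (\<lambda>_ _. False) \<subseteq> E"
  shows "cycle_factor m (lex_V (cycle_graph_V m) 4) E
           (Sh m (\<lambda>x a b. (b+4-a) mod 4 = (h (Suc x mod m) + 4 - h x) mod 4) (\<lambda>_ _. False))"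
proof -
  let ?S = "Sh m (\<lambda>x a b. (b+4-a) mod 4 = (h (Suc x mod m) + 4 - h x) mod 4) (\<lambda>_ _. False)"
  define f where "f i j = (j, (i + h j) mod 4)" for i j :: nat
  define C where "C i = {{f i j, f i ((j+1) mod m)} | j. j < m}" for i
  define CC where "CC = C ` {0..<4}"
  have cyc: "is_cycle m (C i)" for i
  proof -
    have "inj_on (f i) {0..<m}" unfolding inj_on_def f_def by auto
    then show ?thesis unfolding is_cycle_def C_def using m by blast
  qed
  have vert: "\<Union>(C i) = {f i j | j. j < m}" for i
  proof
    show "\<Union>(C i) \<subseteq> {f i j | j. j < m}"
    proof
      fix v assume "v \<in> \<Union>(C i)"
      then obtain j where "j < m" "v = f i j \<or> v = f i ((j+1) mod m)" unfolding C_def by blast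
      moreover have "(j+1) mod m < m" using m by auto
      ultimately show "v \<in> {f i j | j. j < m}" by blast
    qed
  next
    show "{f i j | j. j < m} \<subseteq> \<Union>(C i)" unfolding C_def by blast
  qed
  have disj: "\<forall>X\<in>CC. \<forall>Y\<in>CC. X \<noteq> Y \<longrightarrow> \<Union>X \<inter> \<Union>Y = {}"
  proof (intro ballI impI)
    fix X Y assume XY: "X \<in> CC" "Y \<in> CC" "X \<noteq> Y"
    from XY(1) obtain i where i: "i \<in> {0..<4}" "X = C i" unfolding CC_def by (rule imageE)
    from XY(2) obtain i' where i': "i' \<in> {0..<4}" "Y = C i'" unfolding CC_def by (rule imageE)
    have ii: "i < 4" "i' < 4" "X = C i" "Y = C i'" "i \<noteq> i'" using i i' XY(3) by auto
    show "\<Union>X \<inter> \<Union>Y = {}"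
    proof (rule ccontr)
      assume "\<Union>X \<inter> \<Union>Y \<noteq> {}"
      then obtain v where v: "v \<in> \<Union>(C i)" "v \<in> \<Union>(C i')" using ii(3,4) by blast
      from v(1) obtain j where j: "v = f i j" unfolding vert by blast
      from v(2) obtain j' where j': "v = f i' j'" unfolding vert by blast
      from j j' have "f i j = f i' j'" by simp
      then have "(i + h j) mod 4 = (i' + h j) mod 4" unfolding f_def by auto
      then show False using ar3[of i i'] ii by auto
    qed
  qed
  have cover: "\<Union>(\<Union>CC) = lex_V (cycle_graph_V m) 4"
  proof
    show "\<Union>(\<Union>CC) \<subseteq> lex_V (cycle_graph_V m) 4"
    proof
      fix v assume "v \<in> \<Union>(\<Union>CC)"
      then obtain X where X: "X \<in> CC" "v \<in> \<Union>X" by blast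
      from X(1) obtain i where i: "i \<in> {0..<4}" "X = C i" unfolding CC_def by (rule imageE)
      then obtain j where "j < m" "v = f i j" using vert X(2) by blast
      then show "v \<in> lex_V (cycle_graph_V m) 4" unfolding V_eq f_def by simp
    qed
  next
    show "lex_V (cycle_graph_V m) 4 \<subseteq> \<Union>(\<Union>CC)"
    proof
      fix v assume "v \<in> lex_V (cycle_graph_V m) 4"
      then obtain j c where v: "v = (j,c)" "j < m" "c < 4" unfolding V_eq by auto
      define i where "i = (c + 4 - h j) mod 4"
      have "(i + h j) mod 4 = c" unfolding i_def using ar4[OF v(3) h[of j]] .
      then have "v = f i j" unfolding f_def v by simp
      then have "v \<in> \<Union>(C i)" using vert v(2) by blast
      moreover have "i < 4" unfolding i_def by simp
      ultimately show "v \<in> \<Union>(\<Union>CC)" unfolding CC_def by auto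
    qed
  qed
  have FC: "?S = \<Union>CC"
  proof
    show "?S \<subseteq> \<Union>CC"
    proof
      fix e assume "e \<in> ?S"
      then obtain x a b where e: "e = cr m x a b" "x < m" "a < 4" "b < 4"
        "(b+4-a) mod 4 = (h (Suc x mod m) + 4 - h x) mod 4"
        by (rule Sh_cases) auto
      define i where "i = (a + 4 - h x) mod 4"
      have "(i + h x) mod 4 = a \<and> (i + h (Suc x mod m)) mod 4 = b"
        unfolding i_def using ar2[OF e(3,4) h h e(5)] .
      then have "e = {f i x, f i ((x+1) mod m)}" unfolding e(1) cr_def f_def by simp
      then have "e \<in> C i" unfolding C_def using e(2) by blast
      moreover have "i < 4" unfolding i_def by simp
      ultimately show "e \<in> \<Union>CC" unfolding CC_def by auto
    qed
  next
    show "\<Union>CC \<subseteq> ?S"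
    proof
      fix e assume "e \<in> \<Union>CC"
      then obtain i j where ij: "j < m" "e = {f i j, f i ((j+1) mod m)}" unfolding CC_def C_def by blast
      then have e: "e = cr m j ((i + h j) mod 4) ((i + h (Suc j mod m)) mod 4)" unfolding cr_def f_def by simp
      show "e \<in> ?S" unfolding e
        by (rule Sh_mem_cr[THEN iffD2]) (use m ij ar1 h in auto)
    qed
  qed
  have cycs: "\<forall>X\<in>CC. is_cycle m X" unfolding CC_def using cyc by blast
  show ?thesis unfolding cycle_factor_def
    apply (rule conjI[OF sub])
    apply (rule exI[of _ CC])
    using cycs disj cover FC by simp
qed

lemma c4a:
  assumes m: "3 \<le> m" and sub: "Sh m (\<lambda>_ _ _. False) (\<lambda>a b. a div 2 \<noteq> b div 2) \<subseteq> E"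
  shows "cycle_factor 4 (lex_V (cycle_graph_V m) 4) E (Sh m (\<lambda>_ _ _. False) (\<lambda>a b. a div 2 \<noteq> b div 2))"
proof -
  let ?S = "Sh m (\<lambda>_ _ _. False) (\<lambda>a b. a div 2 \<noteq> b div 2)"
  define C where "C x = {{(x,0::nat),(x,2)},{(x,2),(x,1)},{(x,1),(x,3)},{(x,3),(x,0)}}" for x :: nat
  define CC where "CC = C ` {0..<m}"
  have cyc: "is_cycle 4 (C x)" for x unfolding C_def by (rule cyc4) auto
  have vert: "\<Union>(C x) = {(x,0),(x,1),(x,2),(x,3)}" for x unfolding C_def by auto
  have disj: "\<forall>X\<in>CC. \<forall>Y\<in>CC. X \<noteq> Y \<longrightarrow> \<Union>X \<inter> \<Union>Y = {}"
  proof (intro ballI impI)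
    fix X Y assume XY: "X \<in> CC" "Y \<in> CC" "X \<noteq> Y"
    from XY(1) obtain i where i: "i \<in> {0..<m}" "X = C i" unfolding CC_def by (rule imageE)
    from XY(2) obtain i' where i': "i' \<in> {0..<m}" "Y = C i'" unfolding CC_def by (rule imageE)
    have "i \<noteq> i'" using i i' XY(3) by auto
    then show "\<Union>X \<inter> \<Union>Y = {}" unfolding i(2) i'(2) vert by auto
  qed
  have cover: "\<Union>(\<Union>CC) = lex_V (cycle_graph_V m) 4"
  proof
    show "\<Union>(\<Union>CC) \<subseteq> lex_V (cycle_graph_V m) 4"
    proof
      fix v assume "v \<in> \<Union>(\<Union>CC)"
      then obtain X where X: "X \<in> CC" "v \<in> \<Union>X" by blast
      from X(1) obtain i where i: "i \<in> {0..<m}" "X = C i" unfolding CC_def by (rule imageE)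
      have "v \<in> \<Union>(C i)" using X(2) i(2) by simp
      then show "v \<in> lex_V (cycle_graph_V m) 4" unfolding vert V_eq using i(1) by auto
    qed
  next
    show "lex_V (cycle_graph_V m) 4 \<subseteq> \<Union>(\<Union>CC)"
    proof
      fix v assume "v \<in> lex_V (cycle_graph_V m) 4"
      then obtain j c where v: "v = (j,c)" "j < m" "c < 4" unfolding V_eq by auto
      then have "v \<in> \<Union>(C j)" unfolding vert using less4[of c] by auto
      moreover have "C j \<in> CC" unfolding CC_def using v(2) by simp
      ultimately show "v \<in> \<Union>(\<Union>CC)" by blast
    qed
  qed
  have FC: "?S = \<Union>CC"
  proof
    show "?S \<subseteq> \<Union>CC"
    proof
      fix e assume "e \<in> ?S"
      then obtain x a b where e: "e = {(x,a),(x,b)}" "x < m" "a < 4" "b < 4" "a \<noteq> b" "a div 2 \<noteq> b div 2"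
        by (rule Sh_cases) auto
      have "e \<in> C x" unfolding C_def e(1) using less4[OF e(3)] less4[OF e(4)] e(5,6)
        by (auto simp: doubleton_eq_iff)
      moreover have "C x \<in> CC" unfolding CC_def using e(2) by simp
      ultimately show "e \<in> \<Union>CC" by blast
    qed
  next
    show "\<Union>CC \<subseteq> ?S"
    proof
      fix e assume "e \<in> \<Union>CC"
      then obtain X where X: "X \<in> CC" "e \<in> X" by blast
      from X(1) obtain x where x: "x \<in> {0..<m}" "X = C x" unfolding CC_def by (rule imageE)
      have xm: "x < m" using x by simp
      have Qs: "\<And>a b. (a div 2 \<noteq> b div 2) = (b div 2 \<noteq> (a::nat) div 2)" by auto
      have mem: "a < 4 \<Longrightarrow> b < 4 \<Longrightarrow> a \<noteq> b \<Longrightarrow> a div 2 \<noteq> b div 2 \<Longrightarrow> {(x,a),(x,b)} \<in> ?S" for a b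
        using Sh_mem_inn[OF m xm, of a b "\<lambda>a b. a div 2 \<noteq> b div 2" "\<lambda>_ _ _. False"] Qs by blast
      from X(2) have "e = {(x,0),(x,2)} \<or> e = {(x,2),(x,1)} \<or> e = {(x,1),(x,3)} \<or> e = {(x,3),(x,0)}"
        unfolding x(2) C_def by blast
      then show "e \<in> ?S" using mem[of 0 2] mem[of 2 1] mem[of 1 3] mem[of 3 0] by auto
    qed
  qed
  have cycs: "\<forall>X\<in>CC. is_cycle 4 X" unfolding CC_def using cyc by blast
  show ?thesis unfolding cycle_factor_def
    apply (rule conjI[OF sub])
    apply (rule exI[of _ CC])
    using cycs disj cover FC by simp
qed

lemma c4b:
  assumes m: "3 \<le> m" and sub: "Sh m (\<lambda>x a b. (b+4-a) mod 4 = 2 \<and> a < 2) (\<lambda>a b. a div 2 = b div 2) \<subseteq> E"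
  shows "cycle_factor 4 (lex_V (cycle_graph_V m) 4) E (Sh m (\<lambda>x a b. (b+4-a) mod 4 = 2 \<and> a < 2) (\<lambda>a b. a div 2 = b div 2))"
proof -
  let ?S = "Sh m (\<lambda>x a b. (b+4-a) mod 4 = 2 \<and> a < 2) (\<lambda>a b. a div 2 = b div 2)"
  define n where "n x = Suc x mod m" for x
  define C where "C x = {{(x,0::nat),(x,1)},{(x,1),(n x,3)},{(n x,3),(n x,2)},{(n x,2),(x,0)}}" for x :: nat
  define CC where "CC = C ` {0..<m}"
  have nlt: "n x < m" for x unfolding n_def using m by simp
  have cyc: "is_cycle 4 (C x)" for x unfolding C_def by (rule cyc4) auto
  have vert: "\<Union>(C x) = {(x,0),(x,1),(n x,2),(n x,3)}" for x unfolding C_def by auto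
  have disj: "\<forall>X\<in>CC. \<forall>Y\<in>CC. X \<noteq> Y \<longrightarrow> \<Union>X \<inter> \<Union>Y = {}"
  proof (intro ballI impI)
    fix X Y assume XY: "X \<in> CC" "Y \<in> CC" "X \<noteq> Y"
    from XY(1) obtain i where i: "i \<in> {0..<m}" "X = C i" unfolding CC_def by (rule imageE)
    from XY(2) obtain i' where i': "i' \<in> {0..<m}" "Y = C i'" unfolding CC_def by (rule imageE)
    have ne: "i \<noteq> i'" using i i' XY(3) by auto
    then have "n i \<noteq> n i'" using suc_mod_inj[of i m i'] i i' unfolding n_def by auto
    then show "\<Union>X \<inter> \<Union>Y = {}" using ne unfolding i(2) i'(2) vert by auto
  qed
  have cover: "\<Union>(\<Union>CC) = lex_V (cycle_graph_V m) 4"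
  proof
    show "\<Union>(\<Union>CC) \<subseteq> lex_V (cycle_graph_V m) 4"
    proof
      fix v assume "v \<in> \<Union>(\<Union>CC)"
      then obtain X where X: "X \<in> CC" "v \<in> \<Union>X" by blast
      from X(1) obtain i where i: "i \<in> {0..<m}" "X = C i" unfolding CC_def by (rule imageE)
      have "v \<in> \<Union>(C i)" using X(2) i(2) by simp
      then show "v \<in> lex_V (cycle_graph_V m) 4" unfolding vert V_eq using i(1) nlt[of i] by auto
    qed
  next
    show "lex_V (cycle_graph_V m) 4 \<subseteq> \<Union>(\<Union>CC)"
    proof
      fix v assume "v \<in> lex_V (cycle_graph_V m) 4"
      then obtain j c where v: "v = (j,c)" "j < m" "c < 4" unfolding V_eq by auto
      show "v \<in> \<Union>(\<Union>CC)"
      proof (cases "c < 2")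
        case True
        then have "v \<in> \<Union>(C j)" unfolding vert v by auto
        moreover have "C j \<in> CC" unfolding CC_def using v(2) by simp
        ultimately show ?thesis by blast
      next
        case False
        obtain x where x: "x < m" "n x = j" using pred_ex[OF v(2)] unfolding n_def by blast
        have "v \<in> \<Union>(C x)" unfolding vert v using False v(3) x(2) by auto
        moreover have "C x \<in> CC" unfolding CC_def using x(1) by simp
        ultimately show ?thesis by blast
      qed
    qed
  qed
  have FC: "?S = \<Union>CC"
  proof
    show "?S \<subseteq> \<Union>CC"
    proof
      fix e assume "e \<in> ?S"
      then show "e \<in> \<Union>CC"
      proof (rule Sh_cases)
        fix x a b assume e: "e = cr m x a b" "x < m" "a < 4" "b < 4" "(b+4-a) mod 4 = 2 \<and> a < 2"
        have a01: "a = 0 \<or> a = 1" using e(5) by auto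
        have "(a = 0 \<and> b = 2) \<or> (a = 1 \<and> b = 3)" using less4[OF e(4)] a01 e(5) by auto
        then have "e \<in> C x" unfolding C_def e(1) cr_def n_def by auto
        moreover have "C x \<in> CC" unfolding CC_def using e(2) by simp
        ultimately show "e \<in> \<Union>CC" by blast
      next
        fix y a b assume e: "e = {(y,a),(y,b)}" "y < m" "a < 4" "b < 4" "a \<noteq> b" "a div 2 = b div 2"
        then have ab: "(a = 0 \<and> b = 1) \<or> (a = 1 \<and> b = 0) \<or> (a = 2 \<and> b = 3) \<or> (a = 3 \<and> b = 2)"
          using less4[OF e(3)] less4[OF e(4)] by auto
        show "e \<in> \<Union>CC"
        proof (cases "a < 2")
          case True
          then have "e \<in> C y" using ab unfolding C_def e(1) by auto
          moreover have "C y \<in> CC" unfolding CC_def using e(2) by simp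
          ultimately show ?thesis by blast
        next
          case False
          obtain x where x: "x < m" "n x = y" using pred_ex[OF e(2)] unfolding n_def by blast
          have "e \<in> C x" using ab False x(2) unfolding C_def e(1) by auto
          moreover have "C x \<in> CC" unfolding CC_def using x(1) by simp
          ultimately show ?thesis by blast
        qed
      qed
    qed
  next
    show "\<Union>CC \<subseteq> ?S"
    proof
      fix e assume "e \<in> \<Union>CC"
      then obtain X where X: "X \<in> CC" "e \<in> X" by blast
      from X(1) obtain x where x: "x \<in> {0..<m}" "X = C x" unfolding CC_def by (rule imageE)
      have xm: "x < m" using x by simp
      have Qs: "\<And>a b. (a div 2 = b div 2) = (b div 2 = (a::nat) div 2)" by auto
      have mem: "y < m \<Longrightarrow> a < 4 \<Longrightarrow> b < 4 \<Longrightarrow> a \<noteq> b \<Longrightarrow> a div 2 = b div 2 \<Longrightarrow> {(y,a),(y,b)} \<in> ?S" for y a b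
        using Sh_mem_inn[OF m, of y a b "\<lambda>a b. a div 2 = b div 2" "\<lambda>x a b. (b+4-a) mod 4 = 2 \<and> a < 2"] Qs by blast
      have memc: "a < 2 \<Longrightarrow> b = a + 2 \<Longrightarrow> cr m x a b \<in> ?S" for a b
        using Sh_mem_cr[OF m xm, of a b "\<lambda>x a b. (b+4-a) mod 4 = 2 \<and> a < 2" "\<lambda>a b. a div 2 = b div 2"] by auto
      have e1: "{(x,1),(n x,3)} = cr m x 1 3" "{(n x,2),(x,0)} = cr m x 0 2" unfolding cr_def n_def by auto
      from X(2) have "e = {(x,0),(x,1)} \<or> e = {(x,1),(n x,3)} \<or> e = {(n x,3),(n x,2)} \<or> e = {(n x,2),(x,0)}"
        unfolding x(2) C_def by blast
      then show "e \<in> ?S" using mem[OF xm, of 0 1] mem[OF nlt[of x], of 3 2] memc[of 1 3] memc[of 0 2] e1 by auto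
    qed
  qed
  have cycs: "\<forall>X\<in>CC. is_cycle 4 X" unfolding CC_def using cyc by blast
  show ?thesis unfolding cycle_factor_def
    apply (rule conjI[OF sub])
    apply (rule exI[of _ CC])
    using cycs disj cover FC by simp
qed

lemma Sh_disj2:
  assumes m: "3 \<le> m"
    and P: "\<And>x a b. x < m \<Longrightarrow> a < 4 \<Longrightarrow> b < 4 \<Longrightarrow> \<not> (P x a b \<and> P' x a b)"
    and Q: "\<And>a b. a < 4 \<Longrightarrow> b < 4 \<Longrightarrow> a \<noteq> b \<Longrightarrow> \<not> (Q a b \<and> Q' a b)"
    and Qs: "\<And>a b. Q' a b = Q' b a"
  shows "Sh m P Q \<inter> Sh m P' Q' = {}"
proof (rule ccontr)
  assume "Sh m P Q \<inter> Sh m P' Q' \<noteq> {}"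
  then obtain e where e1: "e \<in> Sh m P Q" and e2: "e \<in> Sh m P' Q'" by blast
  from e1 show False
  proof (rule Sh_cases)
    fix x a b assume h: "e = cr m x a b" "x < m" "a < 4" "b < 4" "P x a b"
    then have "P' x a b" using e2 Sh_mem_cr[OF m h(2,3,4)] by simp
    then show False using P[OF h(2,3,4)] h(5) by blast
  next
    fix x a b assume h: "e = {(x,a),(x,b)}" "x < m" "a < 4" "b < 4" "a \<noteq> b" "Q a b"
    then have "Q' a b" using e2 Sh_mem_inn[OF m h(2,3,4,5), of Q' P'] Qs by simp
    then show False using Q[OF h(3,4,5)] h(6) by blast
  qed
qed

lemma I_pm:
  assumes m: "3 \<le> m"
  shows "perfect_matching (lex_V (cycle_graph_V m) 4) (lex_E (cycle_graph_E m) 4)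
           (Sh m (\<lambda>x a b. (b+4-a) mod 4 = 2 \<and> 2 \<le> a) (\<lambda>_ _. False))"
proof -
  let ?I = "Sh m (\<lambda>x a b. (b+4-a) mod 4 = 2 \<and> 2 \<le> a) (\<lambda>_ _. False)"
  have Ic: "\<exists>x a. x < m \<and> (a = 2 \<or> a = 3) \<and> e = cr m x a (a - 2)" if "e \<in> ?I" for e
    using that
  proof (rule Sh_cases)
    fix x a b assume h: "e = cr m x a b" "x < m" "a < 4" "b < 4" "(b+4-a) mod 4 = 2 \<and> 2 \<le> a"
    then have "(a = 2 \<and> b = 0) \<or> (a = 3 \<and> b = 1)" using less4[OF h(3)] less4[OF h(4)] by auto
    then show ?thesis
    proof
      assume "a = 2 \<and> b = 0" then show ?thesis using h(1,2) by (intro exI[of _ x] exI[of _ 2]) simp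
    next
      assume "a = 3 \<and> b = 1" then show ?thesis using h(1,2) by (intro exI[of _ x] exI[of _ 3]) simp
    qed
  qed simp
  have Imem: "x < m \<Longrightarrow> (a = 2 \<or> a = (3::nat)) \<Longrightarrow> cr m x a (a - 2) \<in> ?I" for x a
    using Sh_mem_cr[OF m, of x a "a - 2" "\<lambda>x a b. (b+4-a) mod 4 = 2 \<and> 2 \<le> a" "\<lambda>_ _. False"] by auto
  have sub: "?I \<subseteq> lex_E (cycle_graph_E m) 4"
  proof
    fix e assume "e \<in> ?I"
    then obtain x a where "x < m" "a = 2 \<or> a = 3" "e = cr m x a (a - 2)" using Ic by blast
    then show "e \<in> lex_E (cycle_graph_E m) 4" using cr_lex by auto
  qed
  have uniq: "\<forall>v\<in>lex_V (cycle_graph_V m) 4. \<exists>!e. e \<in> ?I \<and> v \<in> e"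
  proof
    fix v assume "v \<in> lex_V (cycle_graph_V m) 4"
    then obtain y c where v: "v = (y,c)" "y < m" "c < 4" unfolding V_eq by auto
    have ex: "\<exists>e. e \<in> ?I \<and> v \<in> e"
    proof (cases "c < 2")
      case True
      obtain x where x: "x < m" "Suc x mod m = y" using pred_ex[OF v(2)] by blast
      have "c + 2 = 2 \<or> c + 2 = 3" using True by auto
      then have "cr m x (c+2) (c + 2 - 2) \<in> ?I" using Imem[OF x(1)] by blast
      moreover have "v \<in> cr m x (c+2) (c + 2 - 2)" unfolding cr_def v x(2) by simp
      ultimately show ?thesis by blast
    next
      case False
      then have "c = 2 \<or> c = 3" using v(3) by auto
      then have "cr m y c (c - 2) \<in> ?I" using Imem[OF v(2)] by blast
      moreover have "v \<in> cr m y c (c - 2)" unfolding cr_def v by simp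
      ultimately show ?thesis by blast
    qed
    have un: "e1 = e2" if hh: "e1 \<in> ?I" "v \<in> e1" "e2 \<in> ?I" "v \<in> e2" for e1 e2
    proof -
      obtain x1 a1 where 1: "x1 < m" "a1 = 2 \<or> a1 = 3" "e1 = cr m x1 a1 (a1 - 2)" using Ic hh(1) by blast
      obtain x2 a2 where 2: "x2 < m" "a2 = 2 \<or> a2 = 3" "e2 = cr m x2 a2 (a2 - 2)" using Ic hh(3) by blast
      have v1: "v = (x1,a1) \<or> v = (Suc x1 mod m, a1 - 2)" using hh(2) 1(3) unfolding cr_def by auto
      have v2: "v = (x2,a2) \<or> v = (Suc x2 mod m, a2 - 2)" using hh(4) 2(3) unfolding cr_def by auto
      show ?thesis
      proof (cases "c < 2")
        case True
        then have "v = (Suc x1 mod m, a1 - 2)" "v = (Suc x2 mod m, a2 - 2)" using v1 v2 1(2) 2(2) v(1) by auto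
        then have "Suc x1 mod m = Suc x2 mod m" "a1 = a2" using 1(2) 2(2) by auto
        then have "x1 = x2" "a1 = a2" using suc_mod_inj 1(1) 2(1) by auto
        then show ?thesis using 1(3) 2(3) by simp
      next
        case False
        then have "v = (x1,a1)" "v = (x2,a2)" using v1 v2 1(2) 2(2) v(1) by auto
        then show ?thesis using 1(3) 2(3) by simp
      qed
    qed
    show "\<exists>!e. e \<in> ?I \<and> v \<in> e" using ex un by blast
  qed
  show ?thesis unfolding perfect_matching_def using sub uniq by blast
qed

theorem mainTheorem6:
  fixes m :: nat
  assumes "m \<ge> 3"
  shows "\<exists>I. perfect_matching (lex_V (cycle_graph_V m) 4) (lex_E (cycle_graph_E m) 4) I \<and>
     (\<exists>F :: nat \<Rightarrow> (nat \<times> nat) set set.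
        (\<forall>i<5. \<forall>j<5. i \<noteq> j \<longrightarrow> F i \<inter> F j = {}) \<and>
        (\<Union>i<5. F i) = H_E m - I \<and>
        (\<forall>i<2. cycle_factor 4 (lex_V (cycle_graph_V m) 4) (H_E m - I) (F i)) \<and>
        (\<forall>i\<in>{2..<5}. cycle_factor m (lex_V (cycle_graph_V m) 4) (H_E m - I) (F i)))"
proof -
  have m: "3 \<le> m" using assms .
  define PI where "PI = (\<lambda>(x::nat) (a::nat) (b::nat). (b+4-a) mod 4 = 2 \<and> 2 \<le> a)"
  define I where "I = Sh m PI (\<lambda>_ _. False)"
  define PP where "PP = (\<lambda>(i::nat) (x::nat) (a::nat) (b::nat). if i = 0 then False
      else if i = 1 then (b+4-a) mod 4 = 2 \<and> a < 2 else (b+4-a) mod 4 = DD m i x)"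
  define QQ where "QQ = (\<lambda>(i::nat) (a::nat) (b::nat). if i = 0 then a div 2 \<noteq> b div 2
      else if i = 1 then a div 2 = b div 2 else False)"
  define F where "F i = Sh m (PP i) (QQ i)" for i
  have less5: "i < (5::nat) \<Longrightarrow> i = 0 \<or> i = 1 \<or> i = 2 \<or> i = 3 \<or> i = 4" for i by auto
  have Qsym: "QQ i a b = QQ i b a" for i a b unfolding QQ_def by auto
  have Pex: "\<not> (PP i x a b \<and> PP j x a b)" if "i < 5" "j < 5" "i \<noteq> j" "x < m" for i j x a b
    using DD_prop[OF m that(4)] less5[OF that(1)] less5[OF that(2)] that(3) unfolding PP_def by auto
  have PIex: "\<not> (PP i x a b \<and> PI x a b)" if "i < 5" "x < m" for i x a b
    using DD_prop[OF m that(2)] less5[OF that(1)] unfolding PP_def PI_def by auto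
  have Qex: "\<not> (QQ i a b \<and> QQ j a b)" if "i < 5" "j < 5" "i \<noteq> j" for i j a b
    using less5[OF that(1)] less5[OF that(2)] that(3) unfolding QQ_def by auto
  have disj: "\<forall>i<5. \<forall>j<5. i \<noteq> j \<longrightarrow> F i \<inter> F j = {}"
  proof (intro allI impI)
    fix i j :: nat assume ij: "i < 5" "j < 5" "i \<noteq> j"
    show "F i \<inter> F j = {}" unfolding F_def
      by (rule Sh_disj2[OF m]) (use Pex[OF ij] Qex[OF ij] Qsym in auto)
  qed
  have FI: "F i \<inter> I = {}" if "i < 5" for i
    unfolding F_def I_def by (rule Sh_disj2[OF m]) (use PIex[OF that] in auto)
  have union: "(\<Union>i<5. F i) = H_E m - I"
  proof
    show "(\<Union>i<5. F i) \<subseteq> H_E m - I"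
      using FI Sh_sub[OF m] unfolding F_def by blast
  next
    show "H_E m - I \<subseteq> (\<Union>i<5. F i)"
    proof
      fix e assume e: "e \<in> H_E m - I"
      then have "e \<in> Sh m (\<lambda>_ _ _. True) (\<lambda>_ _. True)" using HE_char[OF m] by auto
      then show "e \<in> (\<Union>i<5. F i)"
      proof (rule Sh_cases)
        fix x a b assume h: "e = cr m x a b" "x < m" "a < 4" "b < 4"
        have nI: "\<not> PI x a b" using e h Sh_mem_cr[OF m h(2,3,4), of PI "\<lambda>_ _. False"] unfolding I_def by auto
        have "\<exists>i<5. PP i x a b"
        proof (cases "(b+4-a) mod 4 = 2")
          case True
          then have "PP 1 x a b" using nI unfolding PI_def PP_def by auto
          then show ?thesis by (intro exI[of _ 1]) auto
        next
          case False
          have "(b+4-a) mod 4 < 4" by simp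
          then have "(b+4-a) mod 4 = DD m 2 x \<or> (b+4-a) mod 4 = DD m 3 x \<or> (b+4-a) mod 4 = DD m 4 x"
            using DD_cover[OF m h(2)] False by blast
          then have "PP 2 x a b \<or> PP 3 x a b \<or> PP 4 x a b" unfolding PP_def by auto
          moreover have "(2::nat) < 5" "(3::nat) < 5" "(4::nat) < 5" by simp_all
          ultimately show ?thesis by blast
        qed
        then obtain i where i: "i < 5" "PP i x a b" by blast
        then have "e \<in> F i" unfolding F_def h(1) using Sh_mem_cr[OF m h(2,3,4)] by auto
        then show ?thesis using i(1) by blast
      next
        fix x a b assume h: "e = {(x,a),(x,b)}" "x < m" "a < 4" "b < 4" "a \<noteq> b"
        have "\<exists>i<5. QQ i a b"
        proof (cases "a div 2 = b div 2")
          case True then show ?thesis unfolding QQ_def by (intro exI[of _ 1]) auto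
        next
          case False then show ?thesis unfolding QQ_def by (intro exI[of _ 0]) auto
        qed
        then obtain i where i: "i < 5" "QQ i a b" by blast
        then have "e \<in> F i" unfolding F_def h(1) using Sh_mem_inn[OF m h(2,3,4,5), of "QQ i" "PP i"] Qsym by auto
        then show ?thesis using i(1) by blast
      qed
    qed
  qed
  have Fsub: "F i \<subseteq> H_E m - I" if "i < 5" for i using union that by blast
  have F0: "F 0 = Sh m (\<lambda>_ _ _. False) (\<lambda>a b. a div 2 \<noteq> b div 2)"
    unfolding F_def PP_def QQ_def by simp
  have F1: "F 1 = Sh m (\<lambda>x a b. (b+4-a) mod 4 = 2 \<and> a < 2) (\<lambda>a b. a div 2 = b div 2)"
    unfolding F_def PP_def QQ_def by simp
  have Fk: "F k = Sh m (\<lambda>x a b. (b+4-a) mod 4 = (hh m k (Suc x mod m) + 4 - hh m k x) mod 4) (\<lambda>_ _. False)"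
    if "2 \<le> k" for k
    unfolding F_def PP_def QQ_def DD_def using that by simp
  have c01: "\<forall>i<2. cycle_factor 4 (lex_V (cycle_graph_V m) 4) (H_E m - I) (F i)"
  proof (intro allI impI)
    fix i :: nat assume "i < 2"
    then have "i = 0 \<or> i = 1" by auto
    then show "cycle_factor 4 (lex_V (cycle_graph_V m) 4) (H_E m - I) (F i)"
    proof
      assume i: "i = 0"
      show ?thesis unfolding i F0 by (rule c4a[OF m]) (use Fsub[of 0] F0 in simp)
    next
      assume i: "i = 1"
      show ?thesis unfolding i F1 by (rule c4b[OF m]) (use Fsub[of 1] F1 in simp)
    qed
  qed
  have c2: "\<forall>i\<in>{2..<5}. cycle_factor m (lex_V (cycle_graph_V m) 4) (H_E m - I) (F i)"
  proof
    fix i :: nat assume i: "i \<in> {2..<5}"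
    then have i2: "2 \<le> i" "i < 5" by auto
    show "cycle_factor m (lex_V (cycle_graph_V m) 4) (H_E m - I) (F i)"
      unfolding Fk[OF i2(1)] by (rule cm_factor[OF m hh_lt]) (use Fsub[OF i2(2)] Fk[OF i2(1)] in simp)
  qed
  have pm: "perfect_matching (lex_V (cycle_graph_V m) 4) (lex_E (cycle_graph_E m) 4) I"
    unfolding I_def PI_def using I_pm[OF m] by simp
  show ?thesis using pm disj union c01 c2 by blast
qed

end
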